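(* Let $\beta\ge 1$ and let $R=(S^0,\dots,S^T)$ be a $\beta$-bounded $T$-covering in a congestion game in which every delay function is $f(x)=x$, and assume $\mathrm{OPT}>0$. Then $$\frac{\sum_{e\in E}n_e(S^T)\,n_e(S^* )}{\mathrm{OPT}}\le\sqrt{2\,\frac{\rho(R)}{\mathrm{OPT}}}.$$
   Context: A congestion game has players $N=\{1,\dots,n\}$, a finite resource set $E$ and strategy sets $\Sigma_i\subseteq 2^E$. For a profile $S=(s_1,\dots,s_n)$, $n_e(S)=|\{i: e\in s_i\}|$. Here all delays are $f(x)=x$, so the cost of player $i$ is $c_i(S)=\sum_{e\in s_i}n_e(S)$ and the social cost is $C(S)=\sum_i c_i(S)=\sum_{e\in E}n_e(S)^2$. Fix an optimal profile $S^*=(s_1^*,\dots,s_n^* )$ minimizing $C$ and write $\mathrm{OPT}=C(S^* )$. A best response of player $i$ in $S$ is a strategy $s_i^b\in\Sigma_i$ minimizing $c_i(S_{-i},\cdot)$ over $\Sigma_i$ (where $(S_{-i},s_i')$ replaces $s_i$ by $s_i'$); if no strategy strictly decreases $i$'s cost, the best response is $s_i$ itself. A $T$-covering is a sequence of profiles $R=(S^0,\dots,S^T)$ together with players $\pi(1),\dots,\pi(T)$ such that for each $1\le t\le T$, $S^t=(S^{t-1}_{-\pi(t)},s')$ where $s'$ is a best response of $\pi(t)$ in $S^{t-1}$, and every player of $N$ occurs at least once among $\pi(1),\dots,\pi(T)$. It is $\beta$-bounded if every player occurs at most $\beta$ times among $\pi(1),\dots,\pi(T)$. For each player $i$, $\mathrm{last}(i)=\max\{t:\pi(t)=i\}$.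 Define $\rho(R)=\sum_{i=1}^n\sum_{e\in s_i^*}\bigl(n_e(S^{\mathrm{last}(i)-1})+1\bigr)$. *)

theory Defs
  imports Complex_Main
begin

text \<open>Congestion game with players N, resources E, strategy sets Sig i \<subseteq> Pow E,
  all delays f(x) = x. A profile is a function from players to strategies.\<close>

definition load :: "'p set \<Rightarrow> ('p \<Rightarrow> 'e set) \<Rightarrow> 'e \<Rightarrow> nat" where
  "load N S e = card {i \<in> N. e \<in> S i}"

definition pcost :: "'p set \<Rightarrow> ('p \<Rightarrow> 'e set) \<Rightarrow> 'p \<Rightarrow> nat" where
  "pcost N S i = (\<Sum>e\<in>S i. load N S e)"

definition social_cost :: "'p set \<Rightarrow> ('p \<Rightarrow> 'e set) \<Rightarrow> nat" where
  "social_cost N S = (\<Sum>i\<in>N. pcost N S i)"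

definition congestion_game :: "'p set \<Rightarrow> 'e set \<Rightarrow> ('p \<Rightarrow> 'e set set) \<Rightarrow> bool" where
  "congestion_game N E Sig \<longleftrightarrow> finite N \<and> finite E \<and> (\<forall>i\<in>N. Sig i \<subseteq> Pow E \<and> Sig i \<noteq> {})"

definition valid_profile :: "'p set \<Rightarrow> ('p \<Rightarrow> 'e set set) \<Rightarrow> ('p \<Rightarrow> 'e set) \<Rightarrow> bool" where
  "valid_profile N Sig S \<longleftrightarrow> (\<forall>i\<in>N. S i \<in> Sig i)"

definition optimal_profile :: "'p set \<Rightarrow> ('p \<Rightarrow> 'e set set) \<Rightarrow> ('p \<Rightarrow> 'e set) \<Rightarrow> bool" where
  "optimal_profile N Sig S \<longleftrightarrow> valid_profile N Sig S \<and>
     (\<forall>S'. valid_profile N Sig S' \<longrightarrow> social_cost N S \<le> social_cost N S')"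

definition best_response :: "'p set \<Rightarrow> ('p \<Rightarrow> 'e set set) \<Rightarrow> ('p \<Rightarrow> 'e set) \<Rightarrow> 'p \<Rightarrow> 'e set \<Rightarrow> bool" where
  "best_response N Sig S i s' \<longleftrightarrow> s' \<in> Sig i \<and>
     (\<forall>s\<in>Sig i. pcost N (S(i := s')) i \<le> pcost N (S(i := s)) i) \<and>
     ((\<forall>s\<in>Sig i. pcost N S i \<le> pcost N (S(i := s)) i) \<longrightarrow> s' = S i)"

definition covering :: "'p set \<Rightarrow> ('p \<Rightarrow> 'e set set) \<Rightarrow> nat \<Rightarrow> (nat \<Rightarrow> 'p \<Rightarrow> 'e set) \<Rightarrow> (nat \<Rightarrow> 'p) \<Rightarrow> bool" where
  "covering N Sig T Ss ply \<longleftrightarrow> valid_profile N Sig (Ss 0) \<and>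
     (\<forall>t\<in>{1..T}. ply t \<in> N \<and>
        (\<exists>s'. best_response N Sig (Ss (t - 1)) (ply t) s' \<and> Ss t = (Ss (t - 1))(ply t := s'))) \<and>
     (\<forall>i\<in>N. \<exists>t\<in>{1..T}. ply t = i)"

definition bounded_covering :: "'p set \<Rightarrow> nat \<Rightarrow> (nat \<Rightarrow> 'p) \<Rightarrow> real \<Rightarrow> bool" where
  "bounded_covering N T ply \<beta> \<longleftrightarrow> (\<forall>i\<in>N. real (card {t\<in>{1..T}. ply t = i}) \<le> \<beta>)"

definition last_move :: "nat \<Rightarrow> (nat \<Rightarrow> 'p) \<Rightarrow> 'p \<Rightarrow> nat" where
  "last_move T ply i = Max {t\<in>{1..T}. ply t = i}"

definition rho :: "'p set \<Rightarrow> nat \<Rightarrow> (nat \<Rightarrow> 'p \<Rightarrow> 'e set) \<Rightarrow> (nat \<Rightarrow> 'p) \<Rightarrow> ('p \<Rightarrow> 'e set) \<Rightarrow> nat" where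
  "rho N T Ss ply Sstar = (\<Sum>i\<in>N. \<Sum>e\<in>Sstar i. load N (Ss (last_move T ply i - 1)) e + 1)"

end

theory Submission
  imports Defs "HOL-Analysis.Analysis"
begin

lemma load_upd_le:
  assumes "finite N"
  shows "load N (S(i := s)) e \<le> load N S e + 1"
proof -
  have "{j \<in> N. e \<in> (S(i := s)) j} \<subseteq> insert i {j \<in> N. e \<in> S j}" by auto
  hence "card {j \<in> N. e \<in> (S(i := s)) j} \<le> card (insert i {j \<in> N. e \<in> S j})"
    by (intro card_mono) (use assms in auto)
  also have "\<dots> \<le> card {j \<in> N. e \<in> S j} + 1" by (simp add: card_insert_le_m1 card_insert_if)
  finally show ?thesis unfolding load_def by simp
qed

lemma swap_sum:
  fixes f :: "'p \<Rightarrow> 'e \<Rightarrow> nat"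
  assumes "finite N" "finite E" "\<forall>i\<in>N. S i \<subseteq> E"
  shows "(\<Sum>i\<in>N. \<Sum>e\<in>S i. f i e) = (\<Sum>e\<in>E. \<Sum>i\<in>{i\<in>N. e \<in> S i}. f i e)"
proof -
  have "(\<Sum>i\<in>N. \<Sum>e\<in>S i. f i e) = (\<Sum>i\<in>N. \<Sum>e\<in>{e. e \<in> E \<and> e \<in> S i}. f i e)"
    by (rule sum.cong) (use assms(3) in \<open>auto intro!: sum.cong\<close>)
  also have "\<dots> = (\<Sum>e\<in>E. \<Sum>i\<in>{i. i \<in> N \<and> e \<in> S i}. f i e)"
    by (rule sum.swap_restrict) (use assms in auto)
  finally show ?thesis by simp
qed

lemma social_cost_eq:
  assumes "finite N" "finite E" "\<forall>i\<in>N. S i \<subseteq> E"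
  shows "social_cost N S = (\<Sum>e\<in>E. load N S e * load N S e)"
proof -
  have "social_cost N S = (\<Sum>e\<in>E. \<Sum>i\<in>{i\<in>N. e \<in> S i}. load N S e)"
    unfolding social_cost_def pcost_def by (rule swap_sum[OF assms])
  also have "\<dots> = (\<Sum>e\<in>E. load N S e * load N S e)"
    by (simp add: load_def)
  finally show ?thesis .
qed

lemma pair_count:
  fixes g :: "'a \<Rightarrow> nat"
  assumes "finite A"
  shows "card A * card A \<le> 2 * (\<Sum>i\<in>A. card {j\<in>A. g j \<le> g i})"
proof -
  have c: "\<And>P. card {j\<in>A. P j} = (\<Sum>j\<in>A. if P j then 1 else (0::nat))"
    using assms by (simp add: sum.If_cases Int_def conj_commute)
  have "(\<Sum>i\<in>A. card {j\<in>A. g j \<le> g i}) = (\<Sum>i\<in>A. \<Sum>j\<in>A. if g j \<le> g i then 1 else (0::nat))"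
    by (simp add: c)
  moreover have "(\<Sum>i\<in>A. card {j\<in>A. g j \<le> g i}) = (\<Sum>i\<in>A. \<Sum>j\<in>A. if g i \<le> g j then 1 else (0::nat))"
    by (simp add: c) (rule sum.swap)
  ultimately have "2 * (\<Sum>i\<in>A. card {j\<in>A. g j \<le> g i}) =
      (\<Sum>i\<in>A. \<Sum>j\<in>A. (if g j \<le> g i then 1 else 0) + (if g i \<le> g j then 1 else (0::nat)))"
    by (simp add: sum.distrib)
  also have "\<dots> \<ge> (\<Sum>i\<in>A. \<Sum>j\<in>A. (1::nat))"
    by (intro sum_mono) auto
  finally show ?thesis by simp
qed

lemma stable:
  assumes cov: "covering N Sig T Ss ply"
  shows "t \<le> t' \<Longrightarrow> t' \<le> T \<Longrightarrow> (\<forall>s\<in>{t<..t'}. ply s \<noteq> j) \<Longrightarrow> Ss t' j = Ss t j"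
proof (induction t')
  case 0 thus ?case by simp
next
  case (Suc t')
  show ?case
  proof (cases "t = Suc t'")
    case True thus ?thesis by simp
  next
    case False
    hence h: "t \<le> t'" using Suc by simp
    have "Suc t' \<in> {1..T}" using Suc by simp
    then obtain s' where "Ss (Suc t') = (Ss t')(ply (Suc t') := s')"
      using cov unfolding covering_def by fastforce
    moreover have "ply (Suc t') \<noteq> j" using Suc.prems h by auto
    ultimately have "Ss (Suc t') j = Ss t' j" by simp
    also have "\<dots> = Ss t j" using Suc h by auto
    finally show ?thesis .
  qed
qed

theorem lemma2:
  fixes N :: "'p set" and E :: "'e set" and Sig :: "'p \<Rightarrow> 'e set set"
    and T :: nat and Ss :: "nat \<Rightarrow> 'p \<Rightarrow> 'e set" and ply :: "nat \<Rightarrow> 'p"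
    and Sstar :: "'p \<Rightarrow> 'e set" and \<beta> :: real
  assumes "congestion_game N E Sig"
    and "optimal_profile N Sig Sstar"
    and "\<beta> \<ge> 1"
    and "covering N Sig T Ss ply"
    and "bounded_covering N T ply \<beta>"
    and "social_cost N Sstar > 0"
  shows "(\<Sum>e\<in>E. real (load N (Ss T) e * load N Sstar e)) / real (social_cost N Sstar)
           \<le> sqrt (2 * real (rho N T Ss ply Sstar) / real (social_cost N Sstar))"
proof -
  have fN: "finite N" and fE: "finite E" and sigE: "\<forall>i\<in>N. Sig i \<subseteq> Pow E"
    using assms(1) unfolding congestion_game_def by auto
  have starSig: "\<forall>i\<in>N. Sstar i \<in> Sig i"
    using assms(2) unfolding optimal_profile_def valid_profile_def by auto
  hence starE: "\<forall>i\<in>N. Sstar i \<subseteq> E" using sigE by blast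
  define lt where "lt i = last_move T ply i" for i
  define F where "F = Ss T"
  have cov: "covering N Sig T Ss ply" by fact
  have lt_props: "lt i \<in> {1..T} \<and> ply (lt i) = i \<and> (\<forall>s\<in>{lt i<..T}. ply s \<noteq> i)" if "i \<in> N" for i
  proof -
    let ?M = "{t\<in>{1..T}. ply t = i}"
    have fin: "finite ?M" by simp
    have ne: "?M \<noteq> {}" using cov that unfolding covering_def by blast
    have "lt i \<in> ?M" unfolding lt_def last_move_def using Max_in[OF fin ne] .
    moreover have "\<forall>s\<in>{lt i<..T}. ply s \<noteq> i"
    proof
      fix s assume s: "s \<in> {lt i<..T}"
      show "ply s \<noteq> i"
      proof
        assume "ply s = i"
        hence "s \<in> ?M" using s by auto
        hence "s \<le> lt i" unfolding lt_def last_move_def using Max_ge[OF fin] by blast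
        thus False using s by auto
      qed
    qed
    ultimately show ?thesis by auto
  qed
  have F_lt: "F i = Ss (lt i) i" if "i \<in> N" for i
    unfolding F_def using stable[OF cov, of "lt i" T i] lt_props[OF that] by auto
  have br: "\<exists>s'. best_response N Sig (Ss (lt i - 1)) i s' \<and> Ss (lt i) = (Ss (lt i - 1))(i := s')"
    if "i \<in> N" for i
    using cov lt_props[OF that] unfolding covering_def by metis
  have FE: "\<forall>i\<in>N. F i \<subseteq> E"
  proof
    fix i assume i: "i \<in> N"
    obtain s' where "best_response N Sig (Ss (lt i - 1)) i s'" "Ss (lt i) = (Ss (lt i - 1))(i := s')"
      using br[OF i] by blast
    hence "F i \<in> Sig i" using F_lt[OF i] unfolding best_response_def by simp
    thus "F i \<subseteq> E" using sigE i by blast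
  qed
  have same: "Ss (lt i) j = F j" if "i \<in> N" "j \<in> N" "lt j \<le> lt i" for i j
  proof -
    have "Ss (lt i) j = Ss (lt j) j"
      using stable[OF cov, of "lt j" "lt i" j] lt_props[OF that(1)] lt_props[OF that(2)] that(3)
      by auto
    thus ?thesis using F_lt[OF that(2)] by simp
  qed
  have player: "(\<Sum>e\<in>F i. card {j\<in>N. e \<in> F j \<and> lt j \<le> lt i})
      \<le> (\<Sum>e\<in>Sstar i. load N (Ss (lt i - 1)) e + 1)" if i: "i \<in> N" for i
  proof -
    obtain s' where bs: "best_response N Sig (Ss (lt i - 1)) i s'" and
      eq: "Ss (lt i) = (Ss (lt i - 1))(i := s')"
      using br[OF i] by blast
    have "(\<Sum>e\<in>F i. card {j\<in>N. e \<in> F j \<and> lt j \<le> lt i}) \<le> (\<Sum>e\<in>F i. load N (Ss (lt i)) e)"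
    proof (rule sum_mono)
      fix e assume "e \<in> F i"
      have "{j\<in>N. e \<in> F j \<and> lt j \<le> lt i} \<subseteq> {j\<in>N. e \<in> Ss (lt i) j}"
        using same[OF i] by auto
      thus "card {j\<in>N. e \<in> F j \<and> lt j \<le> lt i} \<le> load N (Ss (lt i)) e"
        unfolding load_def using fN by (intro card_mono) auto
    qed
    also have "\<dots> = pcost N (Ss (lt i)) i" unfolding pcost_def F_lt[OF i] ..
    also have "\<dots> \<le> pcost N ((Ss (lt i - 1))(i := Sstar i)) i"
      using bs starSig i unfolding eq best_response_def by auto
    also have "\<dots> \<le> (\<Sum>e\<in>Sstar i. load N (Ss (lt i - 1)) e + 1)"
      unfolding pcost_def fun_upd_same by (rule sum_mono) (use load_upd_le[OF fN] in auto)
    finally show ?thesis .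
  qed
  have CF: "(\<Sum>e\<in>E. load N F e * load N F e) \<le> 2 * rho N T Ss ply Sstar"
  proof -
    have "(\<Sum>e\<in>E. load N F e * load N F e)
        \<le> (\<Sum>e\<in>E. 2 * (\<Sum>i\<in>{i\<in>N. e \<in> F i}. card {j\<in>{i\<in>N. e \<in> F i}. lt j \<le> lt i}))"
      unfolding load_def by (intro sum_mono pair_count) (use fN in auto)
    also have "\<dots> = 2 * (\<Sum>e\<in>E. \<Sum>i\<in>{i\<in>N. e \<in> F i}. card {j\<in>N. e \<in> F j \<and> lt j \<le> lt i})"
      by (simp add: sum_distrib_left conj_commute conj_left_commute)
    also have "(\<Sum>e\<in>E. \<Sum>i\<in>{i\<in>N. e \<in> F i}. card {j\<in>N. e \<in> F j \<and> lt j \<le> lt i})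
        = (\<Sum>i\<in>N. \<Sum>e\<in>F i. card {j\<in>N. e \<in> F j \<and> lt j \<le> lt i})"
      by (rule swap_sum[OF fN fE FE, symmetric])
    also have "\<dots> \<le> rho N T Ss ply Sstar"
      unfolding rho_def lt_def[symmetric] by (intro sum_mono player)
    finally show ?thesis by simp
  qed
  define x where "x = (\<Sum>e\<in>E. real (load N F e * load N Sstar e))"
  define C where "C = (\<Sum>e\<in>E. (real (load N F e))\<^sup>2)"
  define Opt where "Opt = real (social_cost N Sstar)"
  have O_eq: "Opt = (\<Sum>e\<in>E. (real (load N Sstar e))\<^sup>2)"
    unfolding Opt_def social_cost_eq[OF fN fE starE] by (simp add: power2_eq_square)
  have Opos: "Opt > 0" using assms(6) Opt_def by simp
  have cs: "x\<^sup>2 \<le> C * Opt" unfolding x_def C_def O_eq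
    using Cauchy_Schwarz_ineq_sum[of "\<lambda>e. real (load N F e)" "\<lambda>e. real (load N Sstar e)" E]
    by simp
  have C2: "C \<le> 2 * real (rho N T Ss ply Sstar)"
  proof -
    have "C = real (\<Sum>e\<in>E. load N F e * load N F e)" unfolding C_def
      by (simp add: power2_eq_square)
    thus ?thesis using CF by linarith
  qed
  have "(x / Opt)\<^sup>2 = x\<^sup>2 / Opt\<^sup>2" by (simp add: power_divide)
  also have "\<dots> \<le> C * Opt / Opt\<^sup>2" using cs Opos by (simp add: divide_right_mono)
  also have "\<dots> = C / Opt" using Opos by (simp add: power2_eq_square)
  also have "\<dots> \<le> 2 * real (rho N T Ss ply Sstar) / Opt" using C2 Opos by (simp add: divide_right_mono)
  finally have "x / Opt \<le> sqrt (2 * real (rho N T Ss ply Sstar) / Opt)" by (rule real_le_rsqrt)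
  thus ?thesis unfolding x_def Opt_def F_def .
qed

end
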